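(* Let $R$ be an associative ring with identity and involution $*$, and let $a\in R^{\#}\cap R^{\dagger}$. Then $a\in R^{SEP}$ if and only if, for both $k=2$ and $k=3$, $(a(a^{\#})^*a^{\dagger})^k$ is a left $(a^{\dagger}a^2)^k$-idempotent, i.e. $\big((a(a^{\#})^*a^{\dagger})^k\big)^2=(a^{\dagger}a^2)^k(a(a^{\#})^*a^{\dagger})^k$.
   Context: An involution on $R$ is a map $x\mapsto x^*$ with $(x^* )^*=x$, $(x+y)^*=x^*+y^*$, $(xy)^*=y^*x^*$. An element $a$ is Moore–Penrose invertible if there is $b$ with $aba=a$, $bab=b$, $(ab)^*=ab$, $(ba)^*=ba$; such $b$ is unique, denoted $a^{\dagger}$, and $R^{\dagger}$ is the set of such $a$. An element $a$ is group invertible if there is $b$ with $aba=a$, $bab=b$, $ab=ba$; such $b$ is unique, denoted $a^{\#}$, and $R^{\#}$ is the set of such $a$. For $a\in R^{\#}\cap R^{\dagger}$, $a$ is SEP if $a^*=a^{\dagger}=a^{\#}$; $R^{SEP}$ denotes the set of SEP elements. For $e,c\in R$, $e$ is a left $c$-idempotent if $e^2=ce$. *)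

theory Defs
  imports Main
begin

definition involution :: "('a::ring_1 \<Rightarrow> 'a) \<Rightarrow> bool" where
  "involution s \<longleftrightarrow> (\<forall>x. s (s x) = x) \<and> (\<forall>x y. s (x + y) = s x + s y)
     \<and> (\<forall>x y. s (x * y) = s y * s x)"

definition is_mp_inverse :: "('a::ring_1 \<Rightarrow> 'a) \<Rightarrow> 'a \<Rightarrow> 'a \<Rightarrow> bool" where
  "is_mp_inverse s a b \<longleftrightarrow> a * b * a = a \<and> b * a * b = b
     \<and> s (a * b) = a * b \<and> s (b * a) = b * a"

definition mp_invertible :: "('a::ring_1 \<Rightarrow> 'a) \<Rightarrow> 'a \<Rightarrow> bool" where
  "mp_invertible s a \<longleftrightarrow> (\<exists>b. is_mp_inverse s a b)"

definition mp_inv :: "('a::ring_1 \<Rightarrow> 'a) \<Rightarrow> 'a \<Rightarrow> 'a" where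
  "mp_inv s a = (THE b. is_mp_inverse s a b)"

definition is_group_inverse :: "'a::ring_1 \<Rightarrow> 'a \<Rightarrow> bool" where
  "is_group_inverse a b \<longleftrightarrow> a * b * a = a \<and> b * a * b = b \<and> a * b = b * a"

definition group_invertible :: "'a::ring_1 \<Rightarrow> bool" where
  "group_invertible a \<longleftrightarrow> (\<exists>b. is_group_inverse a b)"

definition group_inv :: "'a::ring_1 \<Rightarrow> 'a" where
  "group_inv a = (THE b. is_group_inverse a b)"

definition SEP :: "('a::ring_1 \<Rightarrow> 'a) \<Rightarrow> 'a \<Rightarrow> bool" where
  "SEP s a \<longleftrightarrow> group_invertible a \<and> mp_invertible s a
     \<and> s a = mp_inv s a \<and> mp_inv s a = group_inv a"

definition left_idempotent :: "'a::ring_1 \<Rightarrow> 'a \<Rightarrow> bool" where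
  "left_idempotent c e \<longleftrightarrow> e ^ 2 = c * e"

end

theory Submission
  imports Defs
begin

lemma invD:
  assumes "involution s"
  shows "s (s u) = u" "s (u * v) = s v * s u"
  using assms unfolding involution_def by auto

lemma pow_sharp:
  fixes a x :: "'a::ring_1"
  assumes "a*x*a = a" "a*x = x*a"
  shows "a^(Suc n) * x^n = a"
proof (induction n)
  case 0 then show ?case by simp
next
  case (Suc n)
  have aax: "a^(Suc n) * (a*x) = a^(Suc n)"
    by (metis assms mult.assoc power_Suc2)
  have "a^(Suc (Suc n)) * x^(Suc n) = (a^(Suc n) * a) * (x * x^n)"
    by (metis power_Suc2 power_Suc)
  also have "... = a^(Suc n) * (a*x) * x^n" by (simp add: mult.assoc)
  also have "... = a" using aax Suc by simp
  finally show ?case .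
qed

lemma pow_fix:
  fixes e P :: "'a::ring_1"
  assumes "e * P = e"
  shows "e^(Suc n) * P = e^(Suc n)"
  by (metis assms mult.assoc power_Suc2)

lemma pow_inv:
  fixes e f P :: "'a::ring_1"
  assumes "e * f = P" "e * P = e" "P * f = f"
  shows "e^(Suc n) * f^(Suc n) = P"
proof (induction n)
  case 0 then show ?case using assms by simp
next
  case (Suc n)
  have "e^(Suc (Suc n)) * f^(Suc (Suc n)) = e * (e^(Suc n) * f^(Suc n)) * f"
    by (metis power_Suc2 power_Suc mult.assoc)
  also have "... = P" using Suc assms by (metis mult.assoc)
  finally show ?case .
qed

lemma cpow:
  fixes a d :: "'a::ring_1"
  assumes "a*d*a = a"
  shows "(d*a^2)^(Suc n) = d * a^(n+2)"
proof (induction n)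
  case 0 then show ?case by (simp add: power2_eq_square)
next
  case (Suc n)
  have "(d*a^2)^(Suc (Suc n)) = d * a^(n+2) * (d * a * a)"
    using Suc by (simp only: power_Suc2 power2_eq_square mult.assoc)
  also have "... = d * (a^(n+1) * (a*d*a)) * a"
  proof -
    have "a^(n+2) = a^(n+1) * a" by (simp add: power_Suc2 del: power_Suc)
    then show ?thesis by (simp add: mult.assoc)
  qed
  also have "... = d * a^(Suc n + 2)" using assms
    by (simp add: mult.assoc power_Suc2 del: power_Suc)
  finally show ?case .
qed


lemma xpow:
  fixes a x :: "'a::ring_1"
  assumes "a*x*a = a" "a*x = x*a"
  shows "x * a^(Suc (Suc n)) * a * x = a^(Suc n)"
proof -
  have xaa: "x*a*a = a" using assms by (metis mult.assoc)
  have aax: "a*a*x = a" using assms by (metis mult.assoc)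
  have comm: "a * a^n = a^n * a" by (rule power_commutes[symmetric])
  have "x * a^(Suc (Suc n)) * a * x = (x*a*a) * a^n * a * x"
    by (simp add: mult.assoc)
  also have "... = a * a^n * a * x" using xaa by simp
  also have "... = a^n * a * a * x" using comm by simp
  also have "... = a^n * (a*a*x)" by (simp add: mult.assoc)
  also have "... = a^(Suc n)" using aax by (simp add: power_commutes)
  finally show ?thesis .
qed

lemma main:
  fixes s :: "'a::ring_1 \<Rightarrow> 'a" and a d x :: 'a
  assumes inv: "involution s" and mp: "is_mp_inverse s a d" and gi: "is_group_inverse a x"
  shows "(s a = d \<and> d = x) \<longleftrightarrow>
    (\<forall>k\<in>{2::nat, 3}. left_idempotent ((d * a ^ 2) ^ k) ((a * s x * d) ^ k))"
proof -
  have ss: "\<And>u. s (s u) = u" and sm: "\<And>u v. s (u * v) = s v * s u"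
    using invD[OF inv] by auto
  have h1: "a*d*a = a" and h2: "d*a*d = d" and h3: "s(a*d) = a*d" and h4: "s(d*a) = d*a"
    using mp unfolding is_mp_inverse_def by auto
  have g1: "a*x*a = a" and g2: "x*a*x = x" and g3: "a*x = x*a"
    using gi unfolding is_group_inverse_def by auto
  define y where "y = s x"
  have S1: "s a * s d = d*a" using h4 sm by metis
  have S2: "s d * s a = a*d" using h3 sm by metis
  have xxa: "x*x*a = x" using g2 g3 by (metis mult.assoc)
  have axx: "a*x*x = x" using g2 g3 by (metis mult.assoc)
  have xaa: "x*a*a = a" using g1 g3 by (metis mult.assoc)
  have aax: "a*a*x = a" using g1 g3 by (metis mult.assoc)
  have x1: "x*d*a = x" using xxa h1 by (metis mult.assoc)
  have x2: "a*d*x = x" using axx h1 by (metis mult.assoc)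
  have F1: "d*a*y = y" unfolding y_def using x1 sm h4 by (metis mult.assoc)
  have F2: "y*a*d = y" unfolding y_def using x2 sm h3 by (metis mult.assoc)
  have F3: "d*a*s a = s a" using h1 sm h4 by (metis mult.assoc)
  have F4: "y*s a*s a = s a" unfolding y_def using aax sm by (metis mult.assoc)
  have F6: "s d*d*a = s d" using h2 sm h4 by (metis mult.assoc)
  have F7: "s a*s d*d = d" using h2 S1 by (metis mult.assoc)
  have F8: "s a*y*s a = s a" unfolding y_def using g1 sm by (metis mult.assoc)
  define e where "e = a*y*d"
  define f where "f = a*s a*s a*s d*d"
  define P where "P = a*d"
  have ef: "e*f = P"
  proof -
    have "e*f = a*y*(d*a*s a)*s a*s d*d" unfolding e_def f_def by (simp add: mult.assoc)
    also have "... = a*(y*s a*s a)*s d*d" using F3 by (simp add: mult.assoc)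
    also have "... = a*(s a*s d*d)" using F4 by (simp add: mult.assoc)
    also have "... = P" using F7 P_def by simp
    finally show ?thesis .
  qed
  have eP: "e*P = e" unfolding e_def P_def using h2 by (simp add: mult.assoc)
  have Pe: "P*e = e" unfolding e_def P_def using h1 by (metis mult.assoc)
  have Pf: "P*f = f" unfolding f_def P_def using h1 by (metis mult.assoc)
  have ekf: "\<And>n. e^(Suc n) * f^(Suc n) = P" using pow_inv[OF ef eP Pf] .
  have ekP: "\<And>n. e^(Suc n) * P = e^(Suc n)" using pow_fix[OF eP] .
  have Pek: "\<And>n. P * e^(Suc n) = e^(Suc n)" using Pe by (metis mult.assoc power_Suc)
  have cp: "\<And>n. (d*a^2)^(Suc n) = d * a^(n+2)" using cpow[OF h1] .
  have Ek: "e^(Suc m) = d * a^(m+2) * a * d"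
    if E: "left_idempotent ((d * a ^ 2) ^ (Suc m)) (e ^ (Suc m))" for m
  proof -
    have E': "e^(Suc m) * e^(Suc m) = d * a^(m+2) * e^(Suc m)"
      using E cp unfolding left_idempotent_def by (simp add: power2_eq_square)
    have "e^(Suc m) = e^(Suc m) * (e^(Suc m) * f^(Suc m))" using ekP ekf by simp
    also have "... = d * a^(m+2) * (e^(Suc m) * f^(Suc m))" using E' by (metis mult.assoc)
    also have "... = d * a^(m+2) * a * d" using ekf P_def by (simp add: mult.assoc)
    finally show ?thesis .
  qed
  show ?thesis
  proof
    assume A: "s a = d \<and> d = x"
    then have ya: "y = a" unfolding y_def using ss by metis
    have ca: "d * a^2 = a" using A xaa by (simp add: power2_eq_square mult.assoc)
    have ea: "a * s x * d = a" using A ya aax y_def by simp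
    show "\<forall>k\<in>{2::nat, 3}. left_idempotent ((d * a ^ 2) ^ k) ((a * s x * d) ^ k)"
      unfolding ca ea left_idempotent_def by (simp add: power2_eq_square)
  next
    assume B: "\<forall>k\<in>{2::nat, 3}. left_idempotent ((d * a ^ 2) ^ k) ((a * s x * d) ^ k)"
    have B2: "left_idempotent ((d * a ^ 2) ^ (Suc 1)) (e ^ (Suc 1))"
      using B unfolding e_def y_def by (simp add: numeral_2_eq_2)
    have B3: "left_idempotent ((d * a ^ 2) ^ (Suc 2)) (e ^ (Suc 2))"
      using B unfolding e_def y_def by (simp add: numeral_3_eq_3 numeral_2_eq_2)
    have n3: "(1+2::nat) = 3" "(2+2::nat) = 4" by simp_all
    have e2: "e^(Suc 1) = d * a^3 * a * d" using Ek[OF B2] n3 by metis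
    have e3: "e^(Suc 2) = d * a^4 * a * d" using Ek[OF B3] n3 by metis
    have Z: "d*a^3*a*d*a = d*a^3*a" using h1 by (simp add: mult.assoc)
    have Zx: "a^3*a*x^3 = a" using pow_sharp[OF g1 g3, of 3] power_Suc2[of a 3] by metis
    have "a*d*d*a^3*a*d = d*a^3*a*d" using Pek[of 1] e2 P_def by (simp add: mult.assoc)
    then have "a*d*d*a^3*a*d*a*x^3 = d*a^3*a*d*a*x^3" by simp
    moreover have h1': "\<And>z. a*(d*(a*z)) = a*z" using h1 by (metis mult.assoc)
    ultimately have "a*d*d*(a^3*a*x^3) = d*(a^3*a*x^3)" by (simp add: mult.assoc)
    then have da: "a*d*d*a = d*a" using Zx by (simp add: mult.assoc)
    have d1: "d = a*d*d" using da h2 by (metis mult.assoc)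
    have "s a = a*d*s a" using F3 da by (metis mult.assoc)
    then have "a = s (a*d*s a)" using ss by metis
    then have a1: "a = a*a*d" using sm ss S2 by (metis mult.assoc)
    have adxa: "a*d = x*a" using a1 xaa by (metis mult.assoc)
    have dx: "d = x" using d1 adxa xxa g3 by (metis mult.assoc)
    have e2': "e^(Suc 1) = a^(Suc 1)" using e2 dx xpow[OF g1 g3, of 1]
      by (simp add: numeral_3_eq_3)
    have e3': "e^(Suc 2) = a^(Suc 2)" using e3 dx xpow[OF g1 g3, of 2]
      by (simp add: numeral_3_eq_3 numeral_2_eq_2 eval_nat_numeral)
    have "e = e * (e^(Suc 1) * f^(Suc 1))" using eP ekf[of 1] by simp
    also have "... = e^(Suc 2) * f^(Suc 1)" by (simp add: mult.assoc eval_nat_numeral)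
    also have "... = a * (e^(Suc 1) * f^(Suc 1))" using e3' e2' by (simp add: mult.assoc eval_nat_numeral)
    also have "... = a" using ekf P_def a1 by (metis mult.assoc)
    finally have ea: "a*y*x = a" unfolding e_def using dx by simp
    have F1': "x*a*y = y" using F1 dx by simp
    have yx: "y*x = x*a" using ea F1' by (metis mult.assoc)
    have "y = y*a*x" using F2 dx by simp
    also have "... = y*x*a" using g3 by (simp add: mult.assoc)
    also have "... = a" using yx xaa by simp
    finally have "y = a" .
    then have "s a = x" unfolding y_def using ss by metis
    then show "s a = d \<and> d = x" using dx by simp
  qed
qed


lemma mp_unique:
  fixes s :: "'a::ring_1 \<Rightarrow> 'a"
  assumes inv: "involution s" and b: "is_mp_inverse s a b" and c: "is_mp_inverse s a c"
  shows "b = c"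
proof -
  have sm: "\<And>u v. s (u * v) = s v * s u" using invD[OF inv] by auto
  have b1: "a*b*a = a" "b*a*b = b" "s(a*b) = a*b" "s(b*a) = b*a" using b unfolding is_mp_inverse_def by auto
  have c1: "a*c*a = a" "c*a*c = c" "s(a*c) = a*c" "s(c*a) = c*a" using c unfolding is_mp_inverse_def by auto
  have "b = b*(a*b)" using b1 by (simp add: mult.assoc)
  also have "... = b*s(a*b)" using b1 by simp
  also have "... = b*(s b * s a)" using sm by simp
  also have "... = b*(s b * s (a*c*a))" using c1 by simp
  also have "... = b*(s b * s a) * (s c * s a)" using sm by (simp add: mult.assoc)
  also have "... = b*s(a*b)*s(a*c)" using sm by simp
  also have "... = b*a*c" using b1 c1 by (simp add: mult.assoc)
  finally have bb: "b = b*a*c" .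
  have "c = (c*a)*c" using c1 by (simp add: mult.assoc)
  also have "... = s(c*a)*c" using c1 by simp
  also have "... = s a * s c * c" using sm by simp
  also have "... = s (a*b*a) * s c * c" using b1 by simp
  also have "... = (s a * s b) * (s a * s c) * c" using sm by (simp add: mult.assoc)
  also have "... = s(b*a)*s(c*a)*c" using sm by simp
  also have "... = b*a*(c*a*c)" using b1 c1 by (simp add: mult.assoc)
  also have "... = b*a*c" using c1 by simp
  finally show ?thesis using bb by simp
qed

lemma gi_unique:
  fixes a b c :: "'a::ring_1"
  assumes b: "is_group_inverse a b" and c: "is_group_inverse a c"
  shows "b = c"
proof -
  have b1: "a*b*a = a" "b*a*b = b" "a*b = b*a" using b unfolding is_group_inverse_def by auto
  have c1: "a*c*a = a" "c*a*c = c" "a*c = c*a" using c unfolding is_group_inverse_def by auto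
  have aab: "a*a*b = a" using b1 by (metis mult.assoc)
  have "a*b = (c*a)*(a*b)" using c1 by (metis mult.assoc)
  also have "... = c*a" using aab by (simp add: mult.assoc)
  finally have abca: "a*b = c*a" .
  have "b = b*(a*b)" using b1 by (simp add: mult.assoc)
  also have "... = b*(a*c)" using abca c1 by simp
  also have "... = (a*b)*c" using b1 by (simp add: mult.assoc)
  also have "... = c*a*c" using abca by simp
  also have "... = c" using c1 by simp
  finally show ?thesis .
qed

theorem theorem4p3:
  fixes s :: "'a::ring_1 \<Rightarrow> 'a" and a :: 'a
  assumes "involution s"
    and "group_invertible a"
    and "mp_invertible s a"
  shows "SEP s a \<longleftrightarrow>
    (\<forall>k\<in>{2::nat, 3}.
       left_idempotent ((mp_inv s a * a ^ 2) ^ k) ((a * s (group_inv a) * mp_inv s a) ^ k))"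
proof -
  obtain d where d: "is_mp_inverse s a d" using assms(3) unfolding mp_invertible_def by blast
  obtain x where x: "is_group_inverse a x" using assms(2) unfolding group_invertible_def by blast
  have md: "mp_inv s a = d" unfolding mp_inv_def
    using d mp_unique[OF assms(1) d] by (metis the_equality)
  have gx: "group_inv a = x" unfolding group_inv_def
    using x gi_unique[OF x] by (metis the_equality)
  have "SEP s a \<longleftrightarrow> (s a = d \<and> d = x)" unfolding SEP_def md gx using assms(2,3) by simp
  also have "... \<longleftrightarrow> (\<forall>k\<in>{2::nat, 3}. left_idempotent ((d * a ^ 2) ^ k) ((a * s x * d) ^ k))"
    by (rule main[OF assms(1) d x])
  finally show ?thesis unfolding md gx .
qed

end
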